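(* Let $X$ be a topological space, $\Gamma$ a family of curves in $X$, $(\mathcal S_n)$ a sequence of finite covers of $X$, and $q>p\ge1$. Suppose there is a sequence $\eta_n>0$ tending to $0$ with $\sup_{s\in\mathcal S_n}\mathrm{mod}_q(\Gamma(s),\mathcal S_n)\le\eta_n$ for all $n$. Then $$\lim_{n\to\infty}\frac{\mathrm{mod}_q(\Gamma,\mathcal S_n)}{\mathrm{mod}_p(\Gamma,\mathcal S_n)}=0.$$
   Context: Combinatorial modulus: for a cover $\mathcal S$ and $p\ge1$, admissible metrics are $\rho:\mathcal S\to[0,\infty)$ with $0<\sum_s\rho(s)^p<\infty$; $\ell_\rho(K)=\sum_{s\in\mathcal S,\ s\cap K\ne\emptyset}\rho(s)$; $V_p(\rho)=\sum_s\rho(s)^p$; $L_\rho(\Gamma,\mathcal S)=\inf_{\gamma\in\Gamma}\ell_\rho(\gamma)$; $\mathrm{mod}_p(\Gamma,\mathcal S)=\inf_\rho V_p(\rho)/L_\rho(\Gamma,\mathcal S)^p$. $\Gamma(s)$ is the set of curves of $\Gamma$ meeting $s$. *)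

theory Defs
  imports "HOL-Analysis.Analysis"
begin

text \<open>Combinatorial modulus. A cover is a set S of subsets of the space; curves are
paths (continuous maps on [0,1]) and a curve meets a set s iff its image does.\<close>

definition is_cover :: "'a set set \<Rightarrow> bool" where
  "is_cover S \<longleftrightarrow> \<Union>S = UNIV"

definition curve_length :: "('a set \<Rightarrow> real) \<Rightarrow> 'a set set \<Rightarrow> 'a set \<Rightarrow> real" where
  "curve_length \<rho> S K = (\<Sum>s\<in>{s\<in>S. s \<inter> K \<noteq> {}}. \<rho> s)"

definition volume_p :: "real \<Rightarrow> ('a set \<Rightarrow> real) \<Rightarrow> 'a set set \<Rightarrow> real" where
  "volume_p p \<rho> S = (\<Sum>s\<in>S. \<rho> s powr p)"

definition admissible :: "real \<Rightarrow> 'a set set \<Rightarrow> ('a set \<Rightarrow> real) \<Rightarrow> bool" where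
  "admissible p S \<rho> \<longleftrightarrow> (\<forall>s\<in>S. 0 \<le> \<rho> s) \<and> 0 < volume_p p \<rho> S"

text \<open>Infimum over the family (infimum of the empty family is \<open>\<infinity>\<close>).\<close>
definition L_rho :: "('a set \<Rightarrow> real) \<Rightarrow> (real \<Rightarrow> 'a::topological_space) set \<Rightarrow> 'a set set \<Rightarrow> ereal" where
  "L_rho \<rho> \<Gamma> S = (INF \<gamma>\<in>\<Gamma>. ereal (curve_length \<rho> S (path_image \<gamma>)))"

definition mod_quot :: "real \<Rightarrow> real \<Rightarrow> ereal \<Rightarrow> ereal" where
  "mod_quot p V L = (if L = \<infinity> then 0 else if L = 0 then \<infinity>
                     else ereal (V / (real_of_ereal L) powr p))"

definition cmod :: "real \<Rightarrow> (real \<Rightarrow> 'a::topological_space) set \<Rightarrow> 'a set set \<Rightarrow> ereal" where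
  "cmod p \<Gamma> S = (INF \<rho>\<in>{\<rho>. admissible p S \<rho>}. mod_quot p (volume_p p \<rho> S) (L_rho \<rho> \<Gamma> S))"

definition curves_meeting :: "(real \<Rightarrow> 'a::topological_space) set \<Rightarrow> 'a set \<Rightarrow> (real \<Rightarrow> 'a) set" where
  "curves_meeting \<Gamma> s = {\<gamma>\<in>\<Gamma>. path_image \<gamma> \<inter> s \<noteq> {}}"

end

theory Submission
  imports Defs
begin

lemma len_nonneg: "\<forall>t\<in>S. 0 \<le> \<rho> t \<Longrightarrow> 0 \<le> curve_length \<rho> S K"
  unfolding curve_length_def by (rule sum_nonneg) auto

lemma L_le: "\<gamma> \<in> \<Gamma> \<Longrightarrow> L_rho \<rho> \<Gamma> S \<le> ereal (curve_length \<rho> S (path_image \<gamma>))"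
  unfolding L_rho_def by (rule INF_lower)

lemma L_empty: "L_rho \<rho> {} S = \<infinity>"
  unfolding L_rho_def by (simp add: top_ereal_def)

lemma L_nonneg: "\<forall>t\<in>S. 0 \<le> \<rho> t \<Longrightarrow> 0 \<le> L_rho \<rho> \<Gamma> S"
  unfolding L_rho_def by (rule INF_greatest) (simp add: len_nonneg)

lemma len_scale: "curve_length (\<lambda>t. \<rho> t / c) S K = curve_length \<rho> S K / c"
  unfolding curve_length_def by (simp add: sum_divide_distrib)

lemma vol_scale: "volume_p p (\<lambda>t. \<rho> t / c) S = volume_p p \<rho> S / c powr p"
  unfolding volume_p_def by (simp add: powr_divide sum_divide_distrib)

lemma mod_quot_nonneg: "0 \<le> V \<Longrightarrow> 0 \<le> mod_quot p V L"
  unfolding mod_quot_def by auto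

lemma cmod_nonneg: "0 \<le> cmod p \<Gamma> S"
  unfolding cmod_def admissible_def
  by (rule INF_greatest) (auto intro!: mod_quot_nonneg)

lemma witness:
  fixes \<Gamma> :: "(real \<Rightarrow> 'a::topological_space) set"
  assumes c: "cmod q (curves_meeting \<Gamma> s) S \<le> ereal \<eta>" and eta: "0 < \<eta>" and q: "0 < q"
  shows "\<exists>\<sigma>. (\<forall>t\<in>S. 0 \<le> \<sigma> t) \<and> volume_p q \<sigma> S \<le> 2 * \<eta> \<and>
     (\<forall>\<gamma>\<in>\<Gamma>. path_image \<gamma> \<inter> s \<noteq> {} \<longrightarrow> 1 \<le> curve_length \<sigma> S (path_image \<gamma>))"
proof -
  let ?G = "curves_meeting \<Gamma> s"
  have "cmod q ?G S < ereal (2*\<eta>)" using c eta by (simp add: le_less_trans)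
  then obtain \<sigma>0 where adm: "admissible q S \<sigma>0" and
    lt: "mod_quot q (volume_p q \<sigma>0 S) (L_rho \<sigma>0 ?G S) < ereal (2*\<eta>)"
    unfolding cmod_def INF_less_iff by auto
  have nn: "\<forall>t\<in>S. 0 \<le> \<sigma>0 t" using adm by (simp add: admissible_def)
  define L where "L = L_rho \<sigma>0 ?G S"
  show ?thesis
  proof (cases "?G = {}")
    case True
    show ?thesis
      apply (rule exI[of _ "\<lambda>_. 0"])
      using True eta q by (auto simp: volume_p_def curves_meeting_def)
  next
    case False
    then obtain \<gamma>0 where g0: "\<gamma>0 \<in> ?G" by blast
    have Lfin: "L \<noteq> \<infinity>" using L_le[OF g0, of \<sigma>0 S] L_def by auto
    have L0: "0 \<le> L" using L_nonneg[OF nn] L_def by simp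
    have Lne0: "L \<noteq> 0" using lt L_def by (auto simp: mod_quot_def)
    obtain c where Lc: "L = ereal c" using Lfin L0 by (cases L) auto
    have cpos: "0 < c" using Lc L0 Lne0 by auto
    have "volume_p q \<sigma>0 S / c powr q < 2*\<eta>" using lt Lc cpos L_def by (auto simp: mod_quot_def)
    show ?thesis
    proof (rule exI[of _ "\<lambda>t. \<sigma>0 t / c"], intro conjI ballI impI)
      show "\<And>t. t \<in> S \<Longrightarrow> 0 \<le> \<sigma>0 t / c" using nn cpos by auto
      show "volume_p q (\<lambda>t. \<sigma>0 t / c) S \<le> 2 * \<eta>"
        using \<open>volume_p q \<sigma>0 S / c powr q < 2*\<eta>\<close> by (simp add: vol_scale)
    next
      fix \<gamma> assume "\<gamma> \<in> \<Gamma>" "path_image \<gamma> \<inter> s \<noteq> {}"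
      then have "\<gamma> \<in> ?G" by (simp add: curves_meeting_def)
      from L_le[OF this, of \<sigma>0 S] have "c \<le> curve_length \<sigma>0 S (path_image \<gamma>)"
        using Lc L_def by simp
      then show "1 \<le> curve_length (\<lambda>t. \<sigma>0 t / c) S (path_image \<gamma>)"
        using cpos by (simp add: len_scale)
    qed
  qed
qed

lemma max_powr:
  assumes "finite B" "0 \<le> a" "\<forall>b\<in>B. 0 \<le> f b" "0 < (q::real)"
  shows "Max (insert a (f ` B)) powr q \<le> a powr q + (\<Sum>b\<in>B. f b powr q)"
proof -
  have "Max (insert a (f ` B)) \<in> insert a (f ` B)" using assms(1) by (intro Max_in) auto
  then show ?thesis
  proof
    assume "Max (insert a (f ` B)) = a"
    then show ?thesis by (simp add: sum_nonneg)
  next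
    assume "Max (insert a (f ` B)) \<in> f ` B"
    then obtain b where b: "b \<in> B" "Max (insert a (f ` B)) = f b" by auto
    have "f b powr q \<le> (\<Sum>b\<in>B. f b powr q)"
      using b assms by (intro member_le_sum) auto
    then show ?thesis using b by (smt (verit) powr_ge_zero)
  qed
qed

lemma main_rho:
  fixes \<Gamma> :: "(real \<Rightarrow> 'a::topological_space) set"
  assumes fin: "finite S" and ne: "S \<noteq> {}" and p: "1 \<le> p" and pq: "p < q"
    and eta: "0 < \<eta>" and del: "0 < \<delta>"
    and wit: "\<forall>s\<in>S. \<exists>\<sigma>. (\<forall>t\<in>S. 0 \<le> \<sigma> t) \<and> volume_p q \<sigma> S \<le> 2 * \<eta> \<and>
     (\<forall>\<gamma>\<in>\<Gamma>. path_image \<gamma> \<inter> s \<noteq> {} \<longrightarrow> 1 \<le> curve_length \<sigma> S (path_image \<gamma>))"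
    and adm: "admissible p S \<rho>"
  shows "cmod q \<Gamma> S \<le> ereal (\<delta> powr (q-p) + 2*\<eta> / \<delta> powr p) * mod_quot p (volume_p p \<rho> S) (L_rho \<rho> \<Gamma> S)"
proof -
  define C where "C = \<delta> powr (q-p) + 2*\<eta> / \<delta> powr p"
  have Cpos: "0 < C" unfolding C_def using del eta by (simp add: add_pos_pos)
  have qpos: "0 < q" using p pq by simp
  have nn: "\<forall>t\<in>S. 0 \<le> \<rho> t" and Vpos: "0 < volume_p p \<rho> S" using adm by (auto simp: admissible_def)
  show ?thesis
  proof (cases "\<Gamma> = {}")
    case True
    have a1: "admissible q S (\<lambda>_. 1)" using fin ne by (simp add: admissible_def volume_p_def card_gt_0_iff)
    have "cmod q \<Gamma> S \<le> mod_quot q (volume_p q (\<lambda>_. 1) S) (L_rho (\<lambda>_. 1) \<Gamma> S)"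
      unfolding cmod_def using a1 by (intro INF_lower) auto
    also have "\<dots> = 0" using True by (simp add: L_empty mod_quot_def)
    finally show ?thesis using True by (simp add: L_empty mod_quot_def)
  next
    case False
    then obtain \<gamma>0 where g0: "\<gamma>0 \<in> \<Gamma>" by blast
    define L where "L = L_rho \<rho> \<Gamma> S"
    have Lfin: "L \<noteq> \<infinity>" using L_le[OF g0, of \<rho> S] L_def by auto
    have L0: "0 \<le> L" using L_nonneg[OF nn] L_def by simp
    show ?thesis
    proof (cases "L = 0")
      case True
      then show ?thesis using Cpos L_def unfolding C_def[symmetric] by (simp add: mod_quot_def)
    next
      case Lne0: False
      obtain c where Lc: "L = ereal c" using Lfin L0 by (cases L) auto
      have cpos: "0 < c" using Lc L0 Lne0 by auto
      define r where "r t = \<rho> t / c" for t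
      have rnn: "\<forall>t\<in>S. 0 \<le> r t" using nn cpos by (simp add: r_def)
      have rlen: "\<forall>\<gamma>\<in>\<Gamma>. 1 \<le> curve_length r S (path_image \<gamma>)"
      proof
        fix \<gamma> assume "\<gamma> \<in> \<Gamma>"
        from L_le[OF this, of \<rho> S] have "c \<le> curve_length \<rho> S (path_image \<gamma>)"
          using Lc L_def by simp
        then show "1 \<le> curve_length r S (path_image \<gamma>)"
          using cpos unfolding r_def by (simp add: len_scale)
      qed
      define W where "W = volume_p p r S"
      have W: "W = volume_p p \<rho> S / c powr p" unfolding W_def r_def by (rule vol_scale)
      from wit obtain \<sigma> where sig: "\<forall>s\<in>S. (\<forall>t\<in>S. 0 \<le> \<sigma> s t) \<and> volume_p q (\<sigma> s) S \<le> 2 * \<eta> \<and>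
        (\<forall>\<gamma>\<in>\<Gamma>. path_image \<gamma> \<inter> s \<noteq> {} \<longrightarrow> 1 \<le> curve_length (\<sigma> s) S (path_image \<gamma>))"
        by metis
      define big where "big = {t\<in>S. \<delta> \<le> r t}"
      have finbig: "finite big" using fin by (simp add: big_def)
      define sm where "sm t = (if r t < \<delta> then r t else 0)" for t
      define r' where "r' t = Max (insert (sm t) ((\<lambda>b. \<sigma> b t) ` big))" for t
      have r'_sm: "sm t \<le> r' t" for t unfolding r'_def using finbig by simp
      have r'_sig: "b \<in> big \<Longrightarrow> \<sigma> b t \<le> r' t" for b t unfolding r'_def using finbig by simp
      have smnn: "t \<in> S \<Longrightarrow> 0 \<le> sm t" for t using rnn by (simp add: sm_def)
      have r'nn: "t \<in> S \<Longrightarrow> 0 \<le> r' t" for t using smnn r'_sm order_trans by blast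
      have sigbig: "b \<in> big \<Longrightarrow> t \<in> S \<Longrightarrow> 0 \<le> \<sigma> b t" for b t using sig by (auto simp: big_def)
      have r'len: "1 \<le> curve_length r' S (path_image \<gamma>)" if g: "\<gamma> \<in> \<Gamma>" for \<gamma>
      proof (cases "\<exists>b\<in>big. path_image \<gamma> \<inter> b \<noteq> {}")
        case True
        then obtain b where b: "b \<in> big" "path_image \<gamma> \<inter> b \<noteq> {}" by blast
        then have "1 \<le> curve_length (\<sigma> b) S (path_image \<gamma>)" using sig g by (auto simp: big_def)
        also have "\<dots> \<le> curve_length r' S (path_image \<gamma>)"
          unfolding curve_length_def using r'_sig[OF b(1)] by (intro sum_mono) auto
        finally show ?thesis .
      next
        case False
        have "1 \<le> curve_length r S (path_image \<gamma>)" using rlen g by blast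
        also have "\<dots> \<le> curve_length r' S (path_image \<gamma>)"
          unfolding curve_length_def
        proof (intro sum_mono)
          fix t assume t: "t \<in> {s \<in> S. s \<inter> path_image \<gamma> \<noteq> {}}"
          then have "t \<notin> big" using False by blast
          then have "r t < \<delta>" using t by (auto simp: big_def)
          then show "r t \<le> r' t" using r'_sm[of t] by (simp add: sm_def)
        qed
        finally show ?thesis .
      qed
      have smq: "sm t powr q \<le> \<delta> powr (q-p) * r t powr p" if t: "t \<in> S" for t
      proof (cases "r t < \<delta>")
        case True
        have "sm t powr q = r t powr p * r t powr (q-p)" using True by (simp add: sm_def flip: powr_add)
        also have "\<dots> \<le> r t powr p * \<delta> powr (q-p)"
          using True rnn t pq by (intro mult_left_mono powr_mono2) auto
        finally show ?thesis by (simp add: mult.commute)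
      next
        case False
        then show ?thesis using qpos by (simp add: sm_def)
      qed
      have cardbig: "real (card big) * \<delta> powr p \<le> W"
      proof -
        have "real (card big) * \<delta> powr p = (\<Sum>t\<in>big. \<delta> powr p)" by simp
        also have "\<dots> \<le> (\<Sum>t\<in>big. r t powr p)"
          using del p by (intro sum_mono powr_mono2) (auto simp: big_def)
        also have "\<dots> \<le> (\<Sum>t\<in>S. r t powr p)"
          using fin by (intro sum_mono2) (auto simp: big_def)
        finally show ?thesis by (simp add: W_def volume_p_def)
      qed
      have V': "volume_p q r' S \<le> C * W"
      proof -
        have "volume_p q r' S \<le> (\<Sum>t\<in>S. sm t powr q + (\<Sum>b\<in>big. \<sigma> b t powr q))"
          unfolding volume_p_def r'_def
          using finbig smnn sigbig qpos by (intro sum_mono max_powr) auto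
        also have "\<dots> = (\<Sum>t\<in>S. sm t powr q) + (\<Sum>b\<in>big. volume_p q (\<sigma> b) S)"
          unfolding volume_p_def by (simp add: sum.distrib sum.swap[of _ S])
        also have "\<dots> \<le> (\<Sum>t\<in>S. \<delta> powr (q-p) * r t powr p) + (\<Sum>b\<in>big. 2 * \<eta>)"
          using smq sig by (intro add_mono sum_mono) (auto simp: big_def)
        also have "\<dots> = \<delta> powr (q-p) * W + real (card big) * (2 * \<eta>)"
          by (simp add: W_def volume_p_def sum_distrib_left)
        also have "\<dots> \<le> \<delta> powr (q-p) * W + W / \<delta> powr p * (2 * \<eta>)"
        proof -
          have "real (card big) \<le> W / \<delta> powr p" using cardbig del by (simp add: field_simps)
          then show ?thesis using eta by (intro add_left_mono mult_right_mono) auto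
        qed
        also have "\<dots> = C * W" by (simp add: C_def algebra_simps)
        finally show ?thesis .
      qed
      have "1 \<le> curve_length r' S (path_image \<gamma>0)" using r'len g0 .
      then obtain t where t: "t \<in> S" "0 < r' t"
        unfolding curve_length_def by (metis (no_types, lifting) le_numeral_extra(2) linorder_not_le mem_Collect_eq sum_nonpos order_trans)
      have Vq: "0 < volume_p q r' S"
        unfolding volume_p_def using fin t r'nn by (intro sum_pos2[of S t]) auto
      have adm': "admissible q S r'" using Vq r'nn by (simp add: admissible_def)
      define L' where "L' = L_rho r' \<Gamma> S"
      have L'1: "1 \<le> L'" unfolding L'_def L_rho_def using r'len by (intro INF_greatest) auto
      have L'fin: "L' \<noteq> \<infinity>" using L_le[OF g0, of r' S] L'_def by auto
      obtain l where l: "L' = ereal l" using L'fin L'1 by (cases L') auto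
      have l1: "1 \<le> l" using l L'1 by simp
      have "cmod q \<Gamma> S \<le> mod_quot q (volume_p q r' S) L'"
        unfolding cmod_def L'_def using adm' by (intro INF_lower) auto
      also have "\<dots> = ereal (volume_p q r' S / l powr q)" using l l1 by (simp add: mod_quot_def)
      also have "\<dots> \<le> ereal (volume_p q r' S)"
      proof -
        have "1 \<le> l powr q" using l1 qpos by (intro ge_one_powr_ge_zero) auto
        then show ?thesis using Vq by (simp add: divide_le_eq)
      qed
      also have "\<dots> \<le> ereal (C * W)" using V' by simp
      also have "\<dots> = ereal C * mod_quot p (volume_p p \<rho> S) (L_rho \<rho> \<Gamma> S)"
        unfolding L_def[symmetric] Lc using cpos W by (simp add: mod_quot_def)
      finally show ?thesis unfolding C_def .
    qed
  qed
qed

lemma ratio_le: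
  fixes x m :: ereal
  assumes "0 \<le> x" "0 \<le> m" "0 < C" "x \<le> ereal C * m"
  shows "x / m \<le> ereal C"
  using assms
  apply (cases x; cases m)
  apply (auto simp: ereal_divide_eq divide_le_eq mult.commute split: if_splits)
  done

lemma ratio_nonneg:
  fixes x m :: ereal
  assumes "0 \<le> x" "0 \<le> m"
  shows "0 \<le> x / m"
  using assms by (cases x; cases m) (auto simp: divide_ereal_def)

lemma C_eq:
  assumes "0 < (\<eta>::real)" "0 < q"
  shows "(\<eta> powr (1/q)) powr (q-p) + 2*\<eta> / (\<eta> powr (1/q)) powr p = 3 * \<eta> powr ((q-p)/q)"
proof -
  have a: "(\<eta> powr (1/q)) powr (q-p) = \<eta> powr ((q-p)/q)" by (simp add: powr_powr)
  have "2*\<eta> / (\<eta> powr (1/q)) powr p = 2 * (\<eta> powr 1 / \<eta> powr (p/q))"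
    using assms by (simp add: powr_powr)
  also have "\<dots> = 2 * \<eta> powr (1 - p/q)" by (simp add: powr_diff)
  also have "1 - p/q = (q-p)/q" using assms by (simp add: field_simps)
  finally show ?thesis using a by simp
qed

theorem corollary4p10:
  fixes \<Gamma> :: "(real \<Rightarrow> 'a::topological_space) set"
    and S :: "nat \<Rightarrow> 'a set set"
    and p q :: real
    and \<eta> :: "nat \<Rightarrow> real"
  assumes curves: "\<forall>\<gamma>\<in>\<Gamma>. path \<gamma>"
    and covers: "\<forall>n. finite (S n) \<and> is_cover (S n)"
    and pq: "1 \<le> p" "p < q"
    and eta_pos: "\<forall>n. 0 < \<eta> n"
    and eta_lim: "\<eta> \<longlonglongrightarrow> 0"
    and bound: "\<forall>n. (SUP s\<in>S n. cmod q (curves_meeting \<Gamma> s) (S n)) \<le> ereal (\<eta> n)"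
  shows "(\<lambda>n. cmod q \<Gamma> (S n) / cmod p \<Gamma> (S n)) \<longlonglongrightarrow> 0"
proof -
  have qpos: "0 < q" using pq by simp
  define C where "C n = 3 * \<eta> n powr ((q-p)/q)" for n
  have Cpos: "0 < C n" for n using eta_pos[rule_format, of n] by (simp add: C_def)
  have key: "cmod q \<Gamma> (S n) \<le> ereal (C n) * cmod p \<Gamma> (S n)" for n
  proof -
    have fin: "finite (S n)" using covers by simp
    have ne: "S n \<noteq> {}" using covers unfolding is_cover_def by auto
    have wit: "\<forall>s\<in>S n. \<exists>\<sigma>. (\<forall>t\<in>S n. 0 \<le> \<sigma> t) \<and> volume_p q \<sigma> (S n) \<le> 2 * \<eta> n \<and>
     (\<forall>\<gamma>\<in>\<Gamma>. path_image \<gamma> \<inter> s \<noteq> {} \<longrightarrow> 1 \<le> curve_length \<sigma> (S n) (path_image \<gamma>))"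
    proof
      fix s assume s: "s \<in> S n"
      have "cmod q (curves_meeting \<Gamma> s) (S n) \<le> ereal (\<eta> n)"
        using bound s by (meson SUP_upper order_trans)
      then show "\<exists>\<sigma>. (\<forall>t\<in>S n. 0 \<le> \<sigma> t) \<and> volume_p q \<sigma> (S n) \<le> 2 * \<eta> n \<and>
     (\<forall>\<gamma>\<in>\<Gamma>. path_image \<gamma> \<inter> s \<noteq> {} \<longrightarrow> 1 \<le> curve_length \<sigma> (S n) (path_image \<gamma>))"
        using witness eta_pos qpos by blast
    qed
    have dpos: "0 < \<eta> n powr (1/q)" using eta_pos[rule_format, of n] by simp
    have Ceq: "C n = (\<eta> n powr (1/q)) powr (q-p) + 2*\<eta> n / (\<eta> n powr (1/q)) powr p"
      using C_eq[of "\<eta> n" q p] eta_pos qpos by (simp add: C_def)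
    have each: "ereal (1 / C n) * cmod q \<Gamma> (S n) \<le> mod_quot p (volume_p p \<rho> (S n)) (L_rho \<rho> \<Gamma> (S n))"
      if adm: "admissible p (S n) \<rho>" for \<rho>
    proof -
      have "cmod q \<Gamma> (S n) \<le> ereal (C n) * mod_quot p (volume_p p \<rho> (S n)) (L_rho \<rho> \<Gamma> (S n))"
        unfolding Ceq using main_rho[OF fin ne pq(1) pq(2) _ dpos wit adm] eta_pos by blast
      then have "ereal (1 / C n) * cmod q \<Gamma> (S n) \<le> ereal (1 / C n) * (ereal (C n) * mod_quot p (volume_p p \<rho> (S n)) (L_rho \<rho> \<Gamma> (S n)))"
        using Cpos[of n] by (intro ereal_mult_left_mono) auto
      also have "\<dots> = mod_quot p (volume_p p \<rho> (S n)) (L_rho \<rho> \<Gamma> (S n))"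
        using Cpos[of n] by (simp add: mult.assoc[symmetric])
      finally show ?thesis .
    qed
    have "ereal (1 / C n) * cmod q \<Gamma> (S n) \<le> cmod p \<Gamma> (S n)"
      unfolding cmod_def[of p] using each by (intro INF_greatest) auto
    then have "ereal (C n) * (ereal (1 / C n) * cmod q \<Gamma> (S n)) \<le> ereal (C n) * cmod p \<Gamma> (S n)"
      using Cpos[of n] by (intro ereal_mult_left_mono) auto
    then show ?thesis using Cpos[of n] by (simp add: mult.assoc[symmetric])
  qed
  have up: "cmod q \<Gamma> (S n) / cmod p \<Gamma> (S n) \<le> ereal (C n)" for n
    using ratio_le[OF cmod_nonneg cmod_nonneg Cpos key] .
  have lo: "0 \<le> cmod q \<Gamma> (S n) / cmod p \<Gamma> (S n)" for n
    using ratio_nonneg[OF cmod_nonneg cmod_nonneg] .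
  have "C \<longlonglongrightarrow> 3 * 0 powr ((q-p)/q)"
  proof -
    have ev: "eventually (\<lambda>n. 0 \<le> \<eta> n) sequentially"
      using eta_pos by (simp add: less_imp_le)
    have "(\<lambda>n. \<eta> n powr ((q-p)/q)) \<longlonglongrightarrow> 0 powr ((q-p)/q)"
      using ev pq by (intro tendsto_powr'[OF eta_lim tendsto_const]) auto
    then show ?thesis unfolding C_def by (intro tendsto_mult tendsto_const)
  qed
  then have "C \<longlonglongrightarrow> 0" using pq by simp
  then have "(\<lambda>n. ereal (C n)) \<longlonglongrightarrow> ereal 0" by (rule tendsto_ereal)
  then have lim: "(\<lambda>n. ereal (C n)) \<longlonglongrightarrow> 0" by (simp only: zero_ereal_def)
  have e1: "\<forall>\<^sub>F n in sequentially. (\<lambda>_. 0::ereal) n \<le> cmod q \<Gamma> (S n) / cmod p \<Gamma> (S n)"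
    using lo by (intro always_eventually) blast
  have e2: "\<forall>\<^sub>F n in sequentially. cmod q \<Gamma> (S n) / cmod p \<Gamma> (S n) \<le> ereal (C n)"
    using up by (intro always_eventually) blast
  show ?thesis by (rule tendsto_sandwich[OF e1 e2 tendsto_const lim])
qed

end
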